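(* In the setting described in the context, let $\bar{\mathcal{Z}}^*$ be the set of minimizers over $z\in\{0,1\}^p$ of $$\bar\mu(z):=\mathbb{E}_{p(e)p_e(x,y)}\big[\log\bar p_e(y\mid x^z)-\log\bar g(y\mid x^z)\big].$$ Assume $p(\bar{\mathcal{Z}}^* )>0$ and that for every $z$ with $p(z)>0$, as $n\to\infty$ and $E\to\infty$, $$\frac{1}{nE}\sum_{i=1}^n\sum_{e=1}^E\log\hat p_e(y_{ei}\mid x_{ei}^z)\xrightarrow{P}\mathbb{E}_{p(e)p_e(y,x^z)}[\log\bar p_e(y\mid x^z)],\qquad\frac{1}{nE}\sum_{i=1}^n\sum_{e=1}^E\log\hat g(y_{ei}\mid x_{ei}^z)\xrightarrow{P}\mathbb{E}_{p(e)p_e(y,x^z)}[\log\bar g(y\mid x^z)].$$ Then, as $n\to\infty$ and $E\to\infty$: (i) $P(\hat z_{n,E}\in\bar{\mathcal{Z}}^* )\to 1$, where $\hat z_{n,E}:=\arg\max_z\hat p(z\mid\mathcal{D})$; and (ii) $\hat p(\bar{\mathcal{Z}}^*\mid\mathcal{D})\xrightarrow{P}1$.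
   Context: Features $x\in\mathbb{R}^p$, outcome $y$. For $z\in\{0,1\}^p$, $x^z$ is the subvector of coordinates $j$ with $z^{(j)}=1$. $\mathcal{E}$ is the set of all environments of interest; each $e\in\mathcal{E}$ has a joint density $p_e(x,y)$; $p(e)$ is the uniform distribution over $\mathcal{E}$. For each $z$ a conditional model class $\mathcal{P}_{y\mid x^z}$ is fixed. The best-fitting local and pooled models are $\bar p_e(y\mid x^z):=\arg\max_{\tilde p\in\mathcal{P}_{y\mid x^z}}\mathbb{E}_{p_e(x,y)}\log\tilde p(y\mid x^z)$ and $\bar g(y\mid x^z):=\arg\max_{\tilde p\in\mathcal{P}_{y\mid x^z}}\sum_{e\in\mathcal{E}}\mathbb{E}_{p_e(x,y)}\log\tilde p(y\mid x^z)$. Data: $E$ environments drawn i.i.d. from $p(e)$, relabeled $e=1,\dots,E$; in each, $n$ i.i.d. observations $(x_{ei},y_{ei})$ from $p_e(x,y)$; $\mathcal{D}$ is all data. A prior $p(z)$ on $\{0,1\}^p$ is given. $\hat p_e(y\mid x^z)$ maximizes $\sum_{i=1}^n\log\tilde p(y_{ei}\mid x_{ei}^z)$ and $\hat g(y\mid x^z)$ maximizes $\sum_{e=1}^E\sum_{i=1}^n\log\tilde p(y_{ei}\mid x_{ei}^z)$ over $\tilde p\in\mathcal{P}_{y\mid x^z}$. The estimated BIP posterior is $\hat p(z\mid\mathcal{D})\propto p(z)\prod_{e=1}^E\prod_{i=1}^n\frac{\hat g(y_{ei}\mid x_{ei}^z)}{\hat p_e(y_{ei}\mid x_{ei}^z)}$,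 and $\hat p(\bar{\mathcal{Z}}^*\mid\mathcal{D})=\sum_{z\in\bar{\mathcal{Z}}^*}\hat p(z\mid\mathcal{D})$. *)

theory Defs
  imports "HOL-Probability.Probability"
begin

type_synonym 'y cond = "(nat \<Rightarrow> real) \<Rightarrow> 'y \<Rightarrow> real"
  \<comment> \<open>a conditional density model p(y | x^z); x is a feature vector nat => real\<close>
type_synonym 'y dataset = "nat \<Rightarrow> nat \<Rightarrow> (nat \<Rightarrow> real) \<times> 'y"
  \<comment> \<open>d e i = (x_ei, y_ei), environment e < E, observation i < n (0-indexed)\<close>

text \<open>Selection vectors z in {0,1}^p, encoded as subsets of {..<p}.\<close>
definition selections :: "nat \<Rightarrow> nat set set" where
  "selections p = Pow {..<p}"

definition proj :: "nat set \<Rightarrow> (nat \<Rightarrow> real) \<Rightarrow> (nat \<Rightarrow> real)" where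
  "proj z x = restrict x z"

definition maximizes :: "('b \<Rightarrow> real) \<Rightarrow> 'b set \<Rightarrow> 'b \<Rightarrow> bool" where
  "maximizes L S f \<longleftrightarrow> f \<in> S \<and> (\<forall>g\<in>S. L g \<le> L f)"

definition env_dist :: "((nat \<Rightarrow> real) \<times> 'y) measure \<Rightarrow> ('env \<Rightarrow> (nat \<Rightarrow> real) \<times> 'y \<Rightarrow> real)
    \<Rightarrow> 'env \<Rightarrow> ((nat \<Rightarrow> real) \<times> 'y) measure" where
  "env_dist \<nu> pd e = density \<nu> (\<lambda>w. ennreal (pd e w))"

definition env_block :: "((nat \<Rightarrow> real) \<times> 'y) measure \<Rightarrow> 'env set
    \<Rightarrow> ('env \<Rightarrow> (nat \<Rightarrow> real) \<times> 'y \<Rightarrow> real) \<Rightarrow> nat \<Rightarrow> (nat \<Rightarrow> (nat \<Rightarrow> real) \<times> 'y) measure" where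
  "env_block \<nu> Env pd n =
     uniform_count_measure Env \<bind> (\<lambda>e. PiM {..<n} (\<lambda>_. env_dist \<nu> pd e))"

definition data_law :: "((nat \<Rightarrow> real) \<times> 'y) measure \<Rightarrow> 'env set
    \<Rightarrow> ('env \<Rightarrow> (nat \<Rightarrow> real) \<times> 'y \<Rightarrow> real) \<Rightarrow> nat \<Rightarrow> nat \<Rightarrow> 'y dataset measure" where
  "data_law \<nu> Env pd n E = PiM {..<E} (\<lambda>_. env_block \<nu> Env pd n)"

definition pop_ll :: "((nat \<Rightarrow> real) \<times> 'y) measure \<Rightarrow> ('env \<Rightarrow> (nat \<Rightarrow> real) \<times> 'y \<Rightarrow> real)
    \<Rightarrow> nat set \<Rightarrow> 'y cond \<Rightarrow> 'env \<Rightarrow> real" where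
  "pop_ll \<nu> pd z f e = (\<integral>w. ln (f (proj z (fst w)) (snd w)) \<partial>env_dist \<nu> pd e)"

definition samp_ll :: "nat \<Rightarrow> nat set \<Rightarrow> 'y cond \<Rightarrow> (nat \<Rightarrow> (nat \<Rightarrow> real) \<times> 'y) \<Rightarrow> real" where
  "samp_ll n z f b = (\<Sum>i<n. ln (f (proj z (fst (b i))) (snd (b i))))"

definition bip_weight :: "(nat set \<Rightarrow> real) \<Rightarrow> nat \<Rightarrow> nat
    \<Rightarrow> (nat set \<Rightarrow> nat \<Rightarrow> 'y cond) \<Rightarrow> (nat set \<Rightarrow> 'y cond) \<Rightarrow> 'y dataset \<Rightarrow> nat set \<Rightarrow> real" where
  "bip_weight prior n E ph gh d z =
     prior z * (\<Prod>e<E. \<Prod>i<n. gh z (proj z (fst (d e i))) (snd (d e i))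
                               / ph z e (proj z (fst (d e i))) (snd (d e i)))"

definition bip_post :: "nat \<Rightarrow> (nat set \<Rightarrow> real) \<Rightarrow> nat \<Rightarrow> nat
    \<Rightarrow> (nat set \<Rightarrow> nat \<Rightarrow> 'y cond) \<Rightarrow> (nat set \<Rightarrow> 'y cond) \<Rightarrow> 'y dataset \<Rightarrow> nat set \<Rightarrow> real" where
  "bip_post p prior n E ph gh d z =
     bip_weight prior n E ph gh d z / (\<Sum>z'\<in>selections p. bip_weight prior n E ph gh d z')"

definition conv_prob :: "(nat \<Rightarrow> nat \<Rightarrow> 'a measure) \<Rightarrow> (nat \<Rightarrow> nat \<Rightarrow> 'a \<Rightarrow> real) \<Rightarrow> real \<Rightarrow> bool" where
  "conv_prob M X c \<longleftrightarrow>
     (\<forall>n E. X n E \<in> borel_measurable (M n E)) \<and>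
     (\<forall>\<epsilon>>0. ((\<lambda>(n, E). measure (M n E) {d \<in> space (M n E). \<epsilon> < \<bar>X n E d - c\<bar>}) \<longlongrightarrow> 0)
               (sequentially \<times>\<^sub>F sequentially))"

end

theory Submission imports Defs begin

lemma env_dist_prob:
  assumes "pd e \<in> borel_measurable \<nu>" "\<And>w. 0 \<le> pd e w" "(\<integral>\<^sup>+ w. ennreal (pd e w) \<partial>\<nu>) = 1"
  shows "prob_space (env_dist \<nu> pd e)"
proof (rule prob_spaceI)
  have "emeasure (env_dist \<nu> pd e) (space (env_dist \<nu> pd e)) = (\<integral>\<^sup>+ w. ennreal (pd e w) * indicator (space \<nu>) w \<partial>\<nu>)"
    unfolding env_dist_def using assms(1) by (subst emeasure_density) auto
  also have "\<dots> = (\<integral>\<^sup>+ w. ennreal (pd e w) \<partial>\<nu>)"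
    by (rule nn_integral_cong) auto
  finally show "emeasure (env_dist \<nu> pd e) (space (env_dist \<nu> pd e)) = 1" using assms(3) by simp
qed

lemma data_law_prob:
  assumes Env: "finite Env" "Env \<noteq> {}"
    and dens: "\<And>e. e \<in> Env \<Longrightarrow> pd e \<in> borel_measurable \<nu>"
              "\<And>e w. e \<in> Env \<Longrightarrow> 0 \<le> pd e w"
              "\<And>e. e \<in> Env \<Longrightarrow> (\<integral>\<^sup>+ w. ennreal (pd e w) \<partial>\<nu>) = 1"
  shows "prob_space (data_law \<nu> Env pd n E)"
proof -
  have blk: "prob_space (env_block \<nu> Env pd n)"
    unfolding env_block_def
  proof (rule prob_space_bind')
    show "uniform_count_measure Env \<in> space (prob_algebra (uniform_count_measure Env))"
      using Env by (simp add: space_prob_algebra prob_space_uniform_count_measure)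
    have "(\<lambda>e. PiM {..<n} (\<lambda>_. env_dist \<nu> pd e)) \<in> count_space Env \<rightarrow>\<^sub>M prob_algebra (PiM {..<n} (\<lambda>_. \<nu>))"
      unfolding measurable_count_space_eq1
    proof
      fix e assume e: "e \<in> Env"
      show "PiM {..<n} (\<lambda>_. env_dist \<nu> pd e) \<in> space (prob_algebra (PiM {..<n} (\<lambda>_. \<nu>)))"
        unfolding space_prob_algebra
        using env_dist_prob[of pd e \<nu>, OF dens(1)[OF e] dens(2)[OF e] dens(3)[OF e]]
        by (auto intro!: prob_space_PiM sets_PiM_cong simp: env_dist_def)
    qed
    then show "(\<lambda>e. PiM {..<n} (\<lambda>_. env_dist \<nu> pd e)) \<in> uniform_count_measure Env \<rightarrow>\<^sub>M prob_algebra (PiM {..<n} (\<lambda>_. \<nu>))"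
      by (subst measurable_cong_sets[OF sets_uniform_count_measure_count_space refl])
  qed
  show ?thesis unfolding data_law_def by (rule prob_space_PiM) (rule blk)
qed

lemma eventually_exp_small:
  fixes K \<eta> t :: real
  assumes "\<eta> > 0" "t > 0"
  shows "eventually (\<lambda>(n::nat, E::nat). 0 < n \<and> 0 < E \<and> K * exp (- (real n * real E * \<eta>)) < t)
           (sequentially \<times>\<^sub>F sequentially)"
proof -
  have "(\<lambda>n::nat. \<bar>K\<bar> * exp (- (real n * \<eta>))) \<longlonglongrightarrow> 0"
  proof -
    have e: "exp (- (real n * \<eta>)) = exp (- \<eta>) ^ n" for n
      by (metis exp_of_nat_mult mult.commute mult_minus_right)
    have "(\<lambda>n. exp (- \<eta>) ^ n) \<longlonglongrightarrow> 0"
      using assms(1) by (intro LIMSEQ_power_zero) auto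
    then show ?thesis unfolding e using tendsto_mult[OF tendsto_const, of _ 0 sequentially "\<bar>K\<bar>"] by simp
  qed
  then have "eventually (\<lambda>n::nat. \<bar>K\<bar> * exp (- (real n * \<eta>)) < t) sequentially"
    using assms(2) by (simp add: order_tendsto_iff)
  then obtain N where N: "\<And>n. n \<ge> N \<Longrightarrow> \<bar>K\<bar> * exp (- (real n * \<eta>)) < t"
    by (auto simp: eventually_sequentially)
  show ?thesis unfolding eventually_prod_sequentially
  proof (intro exI allI impI)
    fix m n assume mn: "m \<ge> Suc N" "n \<ge> Suc N"
    have "real n \<le> real n * real m" using mn by simp
    then have "real n * \<eta> \<le> real n * real m * \<eta>" using assms(1) by (simp add: mult_right_mono)
    then have "exp (- (real n * real m * \<eta>)) \<le> exp (- (real n * \<eta>))" by simp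
    then have "K * exp (- (real n * real m * \<eta>)) \<le> \<bar>K\<bar> * exp (- (real n * \<eta>))"
      by (smt (verit, best) exp_gt_zero mult_left_mono abs_ge_self abs_ge_zero mult_right_mono)
    with N[of n] mn show "case (n, m) of (n, E) \<Rightarrow> 0 < n \<and> 0 < E \<and> K * exp (- (real n * real E * \<eta>)) < t"
      by auto
  qed
qed

lemma core:
  fixes M :: "nat \<Rightarrow> nat \<Rightarrow> 'a measure" and Sel :: "'b set" and prior :: "'b \<Rightarrow> real"
    and c :: "'b \<Rightarrow> real" and A :: "nat \<Rightarrow> nat \<Rightarrow> 'a \<Rightarrow> 'b \<Rightarrow> real"
    and w :: "nat \<Rightarrow> nat \<Rightarrow> 'a \<Rightarrow> 'b \<Rightarrow> real" and zh :: "nat \<Rightarrow> nat \<Rightarrow> 'a \<Rightarrow> 'b"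
  assumes ps: "\<And>n E. prob_space (M n E)"
    and fin: "finite Sel"
    and Z: "Z = {z\<in>Sel. \<forall>z'\<in>Sel. c z' \<le> c z}"
    and z0: "z0 \<in> Z" "prior z0 > 0"
    and prior_nn: "\<And>z. z \<in> Sel \<Longrightarrow> 0 \<le> prior z"
    and Ameas: "\<And>n E z. z \<in> Sel \<Longrightarrow> prior z > 0 \<Longrightarrow> (\<lambda>d. A n E d z) \<in> borel_measurable (M n E)"
    and Aconv: "\<And>z \<epsilon>. z \<in> Sel \<Longrightarrow> prior z > 0 \<Longrightarrow> \<epsilon> > 0 \<Longrightarrow>
       ((\<lambda>(n, E). measure (M n E) {d \<in> space (M n E). \<epsilon> < \<bar>A n E d z - c z\<bar>}) \<longlongrightarrow> 0)
         (sequentially \<times>\<^sub>F sequentially)"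
    and wA: "\<And>n E d z. d \<in> space (M n E) \<Longrightarrow> z \<in> Sel \<Longrightarrow> 0 < n \<Longrightarrow> 0 < E \<Longrightarrow>
       w n E d z = prior z * exp (real n * real E * A n E d z)"
    and wmeas: "\<And>n E z. z \<in> Sel \<Longrightarrow> (\<lambda>d. w n E d z) \<in> borel_measurable (M n E)"
    and zh: "\<And>n E d. d \<in> space (M n E) \<Longrightarrow> zh n E d \<in> Sel \<and>
       (\<forall>z\<in>Sel. w n E d z / (\<Sum>z'\<in>Sel. w n E d z') \<le> w n E d (zh n E d) / (\<Sum>z'\<in>Sel. w n E d z'))"
    and zhmeas: "\<And>n E. {d \<in> space (M n E). zh n E d \<in> Z} \<in> sets (M n E)"
  shows "((\<lambda>(n, E). measure (M n E) {d \<in> space (M n E). zh n E d \<in> Z}) \<longlongrightarrow> 1)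
           (sequentially \<times>\<^sub>F sequentially) \<and>
         conv_prob M (\<lambda>n E d. \<Sum>z\<in>Z. w n E d z / (\<Sum>z'\<in>Sel. w n E d z')) 1"
proof -
  let ?F = "sequentially \<times>\<^sub>F sequentially :: (nat \<times> nat) filter"
  define Pp where "Pp = {z\<in>Sel. prior z > 0}"
  define D where "D = {z\<in>Pp. z \<notin> Z}"
  define \<delta> where "\<delta> = (if D = {} then 1 else Min ((\<lambda>z. c z0 - c z) ` D))"
  define \<eta> where "\<eta> = \<delta> / 3"
  define K where "K = (\<Sum>z\<in>Sel. prior z) / prior z0"
  have ZS: "Z \<subseteq> Sel" using Z by auto
  have z0S: "z0 \<in> Sel" using z0 ZS by auto
  have finPp: "finite Pp" "finite D" using fin by (auto simp: Pp_def D_def)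
  have Dpos: "c z0 - c z > 0" if "z \<in> D" for z
  proof -
    from that have "z \<in> Sel" "z \<notin> Z" by (auto simp: D_def Pp_def)
    then obtain z' where "z' \<in> Sel" "c z' > c z" using Z by auto
    moreover have "c z' \<le> c z0" using z0 Z \<open>z' \<in> Sel\<close> by auto
    ultimately show ?thesis by simp
  qed
  have \<delta>pos: "\<delta> > 0"
    using Dpos finPp by (auto simp: \<delta>_def)
  have \<delta>le: "\<delta> \<le> c z0 - c z" if "z \<in> D" for z
    using that finPp by (auto simp: \<delta>_def)
  have \<eta>pos: "\<eta> > 0" using \<delta>pos by (simp add: \<eta>_def)
  have Kge: "prior z / prior z0 \<le> K" if "z \<in> Sel" for z
  proof -
    have "prior z \<le> (\<Sum>z\<in>Sel. prior z)"
      using that fin prior_nn by (intro member_le_sum) auto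
    then show ?thesis unfolding K_def using z0 by (simp add: divide_right_mono)
  qed
  define Bad where "Bad n E = {d \<in> space (M n E). \<exists>z\<in>Pp. \<eta> < \<bar>A n E d z - c z\<bar>}" for n E
  have Bad_eq: "Bad n E = (\<Union>z\<in>Pp. {d \<in> space (M n E). \<eta> < \<bar>A n E d z - c z\<bar>})" for n E
    by (auto simp: Bad_def)
  have Bset: "{d \<in> space (M n E). \<eta> < \<bar>A n E d z - c z\<bar>} \<in> sets (M n E)" if "z \<in> Pp" for n E z
    using Ameas[of z n E] that by (auto simp: Pp_def)
  have Bad_sets: "Bad n E \<in> sets (M n E)" for n E
    unfolding Bad_eq using Bset finPp by auto
  have Bad_le: "measure (M n E) (Bad n E) \<le> (\<Sum>z\<in>Pp. measure (M n E) {d \<in> space (M n E). \<eta> < \<bar>A n E d z - c z\<bar>})" for n E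
    unfolding Bad_eq using Bset finPp by (intro measure_UNION_le) auto
  have sum_tend: "((\<lambda>x. \<Sum>z\<in>Pp. (\<lambda>(n, E). measure (M n E) {d \<in> space (M n E). \<eta> < \<bar>A n E d z - c z\<bar>}) x) \<longlongrightarrow> 0) ?F"
    by (rule tendsto_null_sum) (use Aconv \<eta>pos in \<open>auto simp: Pp_def\<close>)
  have Bad_tend: "((\<lambda>(n, E). measure (M n E) (Bad n E)) \<longlongrightarrow> 0) ?F"
  proof (rule tendsto_sandwich[OF _ _ tendsto_const sum_tend])
    show "\<forall>\<^sub>F x in ?F. 0 \<le> (case x of (n, E) \<Rightarrow> measure (M n E) (Bad n E))"
      by (auto split: prod.splits)
    show "\<forall>\<^sub>F x in ?F. (case x of (n, E) \<Rightarrow> measure (M n E) (Bad n E)) \<le>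
        (\<Sum>z\<in>Pp. (\<lambda>(n, E). measure (M n E) {d \<in> space (M n E). \<eta> < \<bar>A n E d z - c z\<bar>}) x)"
      using Bad_le by (auto split: prod.splits simp: case_prod_beta)
  qed
  have good: "w n E d z \<le> prior z / prior z0 * w n E d z0 * exp (- (real n * real E * \<eta>))"
    if d: "d \<in> space (M n E)" "d \<notin> Bad n E" and nE: "0 < n" "0 < E" and z: "z \<in> Sel" "z \<notin> Z" for n E d z
  proof (cases "prior z > 0")
    case False
    then have "prior z = 0" using prior_nn[OF z(1)] by simp
    then show ?thesis using wA[OF d(1) z(1) nE] by simp
  next
    case True
    then have zD: "z \<in> D" and zP: "z \<in> Pp" using z by (auto simp: D_def Pp_def)
    have z0P: "z0 \<in> Pp" using z0 z0S by (auto simp: Pp_def)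
    have "\<bar>A n E d z - c z\<bar> \<le> \<eta>" "\<bar>A n E d z0 - c z0\<bar> \<le> \<eta>"
      using d zP z0P by (auto simp: Bad_def not_less)
    moreover have "\<delta> \<le> c z0 - c z" using \<delta>le[OF zD] .
    ultimately have diff: "A n E d z \<le> A n E d z0 - \<eta>" unfolding \<eta>_def by linarith
    have nEpos: "real n * real E > 0" using nE by simp
    have "real n * real E * A n E d z \<le> real n * real E * A n E d z0 + - (real n * real E * \<eta>)"
      using mult_left_mono[OF diff, of "real n * real E"] nEpos by (simp add: algebra_simps)
    then have ex: "exp (real n * real E * A n E d z) \<le> exp (real n * real E * A n E d z0) * exp (- (real n * real E * \<eta>))"
      by (simp add: exp_add[symmetric])
    have "w n E d z = prior z * exp (real n * real E * A n E d z)" using wA[OF d(1) z(1) nE] .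
    also have "\<dots> \<le> prior z * (exp (real n * real E * A n E d z0) * exp (- (real n * real E * \<eta>)))"
      using ex True by (intro mult_left_mono) auto
    also have "\<dots> = prior z / prior z0 * w n E d z0 * exp (- (real n * real E * \<eta>))"
      using wA[OF d(1) z0S nE] z0 by (simp add: field_simps)
    finally show ?thesis .
  qed
  have wnn: "0 \<le> w n E d z" if "d \<in> space (M n E)" "z \<in> Sel" "0 < n" "0 < E" for n E d z
    using wA[OF that] prior_nn[OF that(2)] by simp
  have w0pos: "0 < w n E d z0" if "d \<in> space (M n E)" "0 < n" "0 < E" for n E d
    using wA[OF that(1) z0S that(2,3)] z0 by simp
  have Wge: "w n E d z0 \<le> (\<Sum>z'\<in>Sel. w n E d z')" if "d \<in> space (M n E)" "0 < n" "0 < E" for n E d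
    using fin z0S wnn[OF that(1) _ that(2,3)] by (intro member_le_sum) auto
  have rest: "(\<Sum>z\<in>Sel - Z. w n E d z) \<le> K * exp (- (real n * real E * \<eta>)) * w n E d z0"
    if d: "d \<in> space (M n E)" "d \<notin> Bad n E" and nE: "0 < n" "0 < E" for n E d
  proof -
    have "(\<Sum>z\<in>Sel - Z. w n E d z) \<le> (\<Sum>z\<in>Sel - Z. prior z / prior z0 * w n E d z0 * exp (- (real n * real E * \<eta>)))"
      using good[OF d nE] by (intro sum_mono) auto
    also have "\<dots> = (\<Sum>z\<in>Sel - Z. prior z) / prior z0 * w n E d z0 * exp (- (real n * real E * \<eta>))"
      by (simp add: sum_distrib_right sum_divide_distrib)
    also have "\<dots> \<le> (\<Sum>z\<in>Sel. prior z) / prior z0 * w n E d z0 * exp (- (real n * real E * \<eta>))"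
      using fin prior_nn z0 w0pos[OF d(1) nE]
      by (intro mult_right_mono divide_right_mono sum_mono2) auto
    finally show ?thesis unfolding K_def by (simp add: mult_ac)
  qed
  have zhZ: "zh n E d \<in> Z"
    if d: "d \<in> space (M n E)" "d \<notin> Bad n E" and nE: "0 < n" "0 < E" and Ks: "K * exp (- (real n * real E * \<eta>)) < 1" for n E d
  proof (rule ccontr)
    assume nz: "zh n E d \<notin> Z"
    have zS: "zh n E d \<in> Sel" using zh[OF d(1)] by auto
    have Wpos: "0 < (\<Sum>z'\<in>Sel. w n E d z')" using Wge[OF d(1) nE] w0pos[OF d(1) nE] by linarith
    have "w n E d z0 \<le> w n E d (zh n E d)"
      using zh[OF d(1)] z0S Wpos by (auto simp: divide_le_cancel)
    also have "\<dots> \<le> prior (zh n E d) / prior z0 * w n E d z0 * exp (- (real n * real E * \<eta>))"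
      using good[OF d nE zS nz] .
    also have "\<dots> \<le> K * w n E d z0 * exp (- (real n * real E * \<eta>))"
      using Kge[OF zS] w0pos[OF d(1) nE] by (intro mult_right_mono) auto
    also have "\<dots> < w n E d z0"
      using Ks w0pos[OF d(1) nE] by (simp add: mult_ac)
    finally show False by simp
  qed
  have post_close: "\<bar>(\<Sum>z\<in>Z. w n E d z / (\<Sum>z'\<in>Sel. w n E d z')) - 1\<bar> \<le> K * exp (- (real n * real E * \<eta>))"
    if d: "d \<in> space (M n E)" "d \<notin> Bad n E" and nE: "0 < n" "0 < E" for n E d
  proof -
    define W where "W = (\<Sum>z'\<in>Sel. w n E d z')"
    have Wpos: "0 < W" unfolding W_def using Wge[OF d(1) nE] w0pos[OF d(1) nE] by linarith
    have split: "W = (\<Sum>z\<in>Z. w n E d z) + (\<Sum>z\<in>Sel - Z. w n E d z)"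
      unfolding W_def using fin ZS by (metis add.commute sum.subset_diff)
    have "(\<Sum>z\<in>Z. w n E d z / W) = (\<Sum>z\<in>Z. w n E d z) / W" by (simp add: sum_divide_distrib)
    also have "\<dots> = 1 - (\<Sum>z\<in>Sel - Z. w n E d z) / W" using Wpos split by (simp add: field_simps)
    finally have eq: "(\<Sum>z\<in>Z. w n E d z / W) - 1 = - ((\<Sum>z\<in>Sel - Z. w n E d z) / W)" by simp
    have nn: "0 \<le> (\<Sum>z\<in>Sel - Z. w n E d z)" using wnn[OF d(1) _ nE] by (intro sum_nonneg) auto
    have "(\<Sum>z\<in>Sel - Z. w n E d z) \<le> K * exp (- (real n * real E * \<eta>)) * W"
      using rest[OF d nE] Wge[OF d(1) nE] unfolding W_def[symmetric]
      by (smt (verit) Kge z0S z0(2) divide_self_if mult_left_mono exp_gt_zero mult_nonneg_nonneg order_trans)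
    then have "(\<Sum>z\<in>Sel - Z. w n E d z) / W \<le> K * exp (- (real n * real E * \<eta>))"
      using Wpos by (simp add: divide_le_eq)
    then show ?thesis unfolding W_def[symmetric] eq using nn Wpos by simp
  qed
  have part1: "((\<lambda>(n, E). measure (M n E) {d \<in> space (M n E). zh n E d \<in> Z}) \<longlongrightarrow> 1) ?F"
  proof (rule tendsto_sandwich)
    show "((\<lambda>x. 1 - (\<lambda>(n, E). measure (M n E) (Bad n E)) x) \<longlongrightarrow> 1) ?F"
      using tendsto_diff[OF tendsto_const Bad_tend, of 1] by simp
    show "((\<lambda>x. 1 :: real) \<longlongrightarrow> 1) ?F" by simp
    show "\<forall>\<^sub>F x in ?F. (case x of (n, E) \<Rightarrow> measure (M n E) {d \<in> space (M n E). zh n E d \<in> Z}) \<le> 1"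
      using ps by (intro always_eventually) (auto split: prod.splits intro: prob_space.prob_le_1)
    show "\<forall>\<^sub>F x in ?F. 1 - (case x of (n, E) \<Rightarrow> measure (M n E) (Bad n E))
        \<le> (case x of (n, E) \<Rightarrow> measure (M n E) {d \<in> space (M n E). zh n E d \<in> Z})"
      using eventually_exp_small[OF \<eta>pos zero_less_one, of K]
    proof eventually_elim
      case (elim x)
      obtain n E where x: "x = (n, E)" by (cases x)
      interpret prob_space "M n E" by (rule ps)
      have sub: "space (M n E) - Bad n E \<subseteq> {d \<in> space (M n E). zh n E d \<in> Z}"
        using zhZ elim x by auto
      have "1 - measure (M n E) (Bad n E) = measure (M n E) (space (M n E) - Bad n E)"
        using prob_compl[OF Bad_sets] by simp
      also have "\<dots> \<le> measure (M n E) {d \<in> space (M n E). zh n E d \<in> Z}"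
        using sub zhmeas by (intro finite_measure_mono) auto
      finally show ?case using x by simp
    qed
  qed
  have part2: "conv_prob M (\<lambda>n E d. \<Sum>z\<in>Z. w n E d z / (\<Sum>z'\<in>Sel. w n E d z')) 1"
    unfolding conv_prob_def
  proof (intro conjI allI impI)
    fix n E
    show "(\<lambda>d. \<Sum>z\<in>Z. w n E d z / (\<Sum>z'\<in>Sel. w n E d z')) \<in> borel_measurable (M n E)"
      using wmeas ZS by (intro borel_measurable_sum borel_measurable_divide) auto
  next
    fix \<epsilon> :: real assume \<epsilon>: "\<epsilon> > 0"
    show "((\<lambda>(n, E). measure (M n E) {d \<in> space (M n E). \<epsilon> < \<bar>(\<Sum>z\<in>Z. w n E d z / (\<Sum>z'\<in>Sel. w n E d z')) - 1\<bar>}) \<longlongrightarrow> 0) ?F"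
    proof (rule tendsto_sandwich[OF _ _ tendsto_const Bad_tend])
      show "\<forall>\<^sub>F x in ?F. 0 \<le> (case x of (n, E) \<Rightarrow> measure (M n E) {d \<in> space (M n E). \<epsilon> < \<bar>(\<Sum>z\<in>Z. w n E d z / (\<Sum>z'\<in>Sel. w n E d z')) - 1\<bar>})"
        by (auto split: prod.splits)
      show "\<forall>\<^sub>F x in ?F. (case x of (n, E) \<Rightarrow> measure (M n E) {d \<in> space (M n E). \<epsilon> < \<bar>(\<Sum>z\<in>Z. w n E d z / (\<Sum>z'\<in>Sel. w n E d z')) - 1\<bar>})
          \<le> (case x of (n, E) \<Rightarrow> measure (M n E) (Bad n E))"
        using eventually_exp_small[OF \<eta>pos \<epsilon>, of K]
      proof eventually_elim
        case (elim x)
        obtain n E where x: "x = (n, E)" by (cases x)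
        interpret prob_space "M n E" by (rule ps)
        have sub: "{d \<in> space (M n E). \<epsilon> < \<bar>(\<Sum>z\<in>Z. w n E d z / (\<Sum>z'\<in>Sel. w n E d z')) - 1\<bar>} \<subseteq> Bad n E"
          using post_close elim x by (force simp: Bad_def)
        show ?case using x finite_measure_mono[OF sub Bad_sets] by simp
      qed
    qed
  qed
  show ?thesis using part1 part2 by blast
qed

theorem theorem7:
  fixes p :: nat
    and Env :: "'env set"
    and \<nu> :: "((nat \<Rightarrow> real) \<times> 'y) measure"
    and pd :: "'env \<Rightarrow> (nat \<Rightarrow> real) \<times> 'y \<Rightarrow> real"
    and Pc :: "nat set \<Rightarrow> 'y cond set"
    and pbar :: "nat set \<Rightarrow> 'env \<Rightarrow> 'y cond"
    and gbar :: "nat set \<Rightarrow> 'y cond"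
    and prior :: "nat set \<Rightarrow> real"
    and M :: "nat \<Rightarrow> nat \<Rightarrow> 'y dataset measure"
    and phat :: "nat \<Rightarrow> nat \<Rightarrow> 'y dataset \<Rightarrow> nat set \<Rightarrow> nat \<Rightarrow> 'y cond"
    and ghat :: "nat \<Rightarrow> nat \<Rightarrow> 'y dataset \<Rightarrow> nat set \<Rightarrow> 'y cond"
    and zhat :: "nat \<Rightarrow> nat \<Rightarrow> 'y dataset \<Rightarrow> nat set"
    and mubar :: "nat set \<Rightarrow> real"
    and Zstar :: "nat set set"
  assumes Env: "finite Env" "Env \<noteq> {}"
    and dens: "\<And>e. e \<in> Env \<Longrightarrow> pd e \<in> borel_measurable \<nu>"
              "\<And>e w. e \<in> Env \<Longrightarrow> 0 \<le> pd e w"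
              "\<And>e. e \<in> Env \<Longrightarrow> (\<integral>\<^sup>+ w. ennreal (pd e w) \<partial>\<nu>) = 1"
    and model_pos: "\<And>z f x y. z \<in> selections p \<Longrightarrow> f \<in> Pc z \<Longrightarrow> 0 < f x y"
    and pbar: "\<And>z e. z \<in> selections p \<Longrightarrow> e \<in> Env \<Longrightarrow>
                 maximizes (\<lambda>f. pop_ll \<nu> pd z f e) (Pc z) (pbar z e)"
    and gbar: "\<And>z. z \<in> selections p \<Longrightarrow>
                 maximizes (\<lambda>f. \<Sum>e\<in>Env. pop_ll \<nu> pd z f e) (Pc z) (gbar z)"
    and integrable: "\<And>z e. z \<in> selections p \<Longrightarrow> e \<in> Env \<Longrightarrow>
          integrable (env_dist \<nu> pd e) (\<lambda>w. ln (pbar z e (proj z (fst w)) (snd w)))"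
          "\<And>z e. z \<in> selections p \<Longrightarrow> e \<in> Env \<Longrightarrow>
          integrable (env_dist \<nu> pd e) (\<lambda>w. ln (gbar z (proj z (fst w)) (snd w)))"
    and mubar_def: "\<And>z. mubar z = (1 / real (card Env)) *
          (\<Sum>e\<in>Env. \<integral>w. ln (pbar z e (proj z (fst w)) (snd w))
                         - ln (gbar z (proj z (fst w)) (snd w)) \<partial>env_dist \<nu> pd e)"
    and Zstar_def: "Zstar = {z \<in> selections p. \<forall>z'\<in>selections p. mubar z \<le> mubar z'}"
    and prior: "\<And>z. z \<in> selections p \<Longrightarrow> 0 \<le> prior z"
               "(\<Sum>z\<in>selections p. prior z) = 1"
    and prior_Zstar: "(\<Sum>z\<in>Zstar. prior z) > 0"
    and M_def: "\<And>n E. M n E = data_law \<nu> Env pd n E"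
    and phat: "\<And>n E d z e. d \<in> space (M n E) \<Longrightarrow> z \<in> selections p \<Longrightarrow> e < E \<Longrightarrow>
                 maximizes (\<lambda>f. samp_ll n z f (d e)) (Pc z) (phat n E d z e)"
    and ghat: "\<And>n E d z. d \<in> space (M n E) \<Longrightarrow> z \<in> selections p \<Longrightarrow>
                 maximizes (\<lambda>f. \<Sum>e<E. samp_ll n z f (d e)) (Pc z) (ghat n E d z)"
    and zhat: "\<And>n E d. d \<in> space (M n E) \<Longrightarrow>
                 maximizes (bip_post p prior n E (phat n E d) (ghat n E d) d) (selections p) (zhat n E d)"
    and zhat_meas: "\<And>n E. zhat n E \<in> M n E \<rightarrow>\<^sub>M count_space UNIV"
    and conv_local: "\<And>z. z \<in> selections p \<Longrightarrow> prior z > 0 \<Longrightarrow>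
          conv_prob M
            (\<lambda>n E d. (1 / (real n * real E)) *
               (\<Sum>i<n. \<Sum>e<E. ln (phat n E d z e (proj z (fst (d e i))) (snd (d e i)))))
            ((1 / real (card Env)) *
               (\<Sum>e\<in>Env. \<integral>w. ln (pbar z e (proj z (fst w)) (snd w)) \<partial>env_dist \<nu> pd e))"
    and conv_pooled: "\<And>z. z \<in> selections p \<Longrightarrow> prior z > 0 \<Longrightarrow>
          conv_prob M
            (\<lambda>n E d. (1 / (real n * real E)) *
               (\<Sum>i<n. \<Sum>e<E. ln (ghat n E d z (proj z (fst (d e i))) (snd (d e i)))))
            ((1 / real (card Env)) *
               (\<Sum>e\<in>Env. \<integral>w. ln (gbar z (proj z (fst w)) (snd w)) \<partial>env_dist \<nu> pd e))"
  shows "((\<lambda>(n, E). measure (M n E) {d \<in> space (M n E). zhat n E d \<in> Zstar}) \<longlongrightarrow> 1)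
           (sequentially \<times>\<^sub>F sequentially) \<and>
         conv_prob M (\<lambda>n E d. \<Sum>z\<in>Zstar. bip_post p prior n E (phat n E d) (ghat n E d) d z) 1"
proof -
  define Sel where "Sel = selections p"
  define L where "L z = (1 / real (card Env)) * (\<Sum>e\<in>Env. \<integral>w. ln (pbar z e (proj z (fst w)) (snd w)) \<partial>env_dist \<nu> pd e)" for z
  define G where "G z = (1 / real (card Env)) * (\<Sum>e\<in>Env. \<integral>w. ln (gbar z (proj z (fst w)) (snd w)) \<partial>env_dist \<nu> pd e)" for z
  define c where "c z = G z - L z" for z
  define ap where "ap n E d z = (1 / (real n * real E)) *
               (\<Sum>i<n. \<Sum>e<E. ln (phat n E d z e (proj z (fst (d e i))) (snd (d e i))))" for n E d z
  define ag where "ag n E d z = (1 / (real n * real E)) *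
               (\<Sum>i<n. \<Sum>e<E. ln (ghat n E d z (proj z (fst (d e i))) (snd (d e i))))" for n E d z
  define A where "A n E d z = ag n E d z - ap n E d z" for n E d z
  define w where "w n E d z = bip_weight prior n E (phat n E d) (ghat n E d) d z" for n E d z
  have fin: "finite Sel" by (simp add: Sel_def selections_def)
  have mu: "mubar z = - c z" if "z \<in> Sel" for z
  proof -
    have "mubar z = (1 / real (card Env)) * (\<Sum>e\<in>Env. (\<integral>w. ln (pbar z e (proj z (fst w)) (snd w)) \<partial>env_dist \<nu> pd e)
                   - (\<integral>w. ln (gbar z (proj z (fst w)) (snd w)) \<partial>env_dist \<nu> pd e))"
      unfolding mubar_def using integrable that unfolding Sel_def
      by (intro arg_cong2[where f="(*)"] refl sum.cong integral_diff) auto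
    then show ?thesis unfolding c_def L_def G_def by (simp add: sum_subtractf algebra_simps)
  qed
  have Z: "Zstar = {z\<in>Sel. \<forall>z'\<in>Sel. c z' \<le> c z}"
    unfolding Zstar_def Sel_def[symmetric] using mu by auto
  have ZS: "Zstar \<subseteq> Sel" using Z by auto
  obtain z0 where z0: "z0 \<in> Zstar" "prior z0 > 0"
  proof -
    have "\<not> (\<forall>z\<in>Zstar. prior z \<le> 0)"
      using prior_Zstar sum_nonpos[of Zstar prior] by force
    then show ?thesis using that by force
  qed
  have prior_nn: "\<And>z. z \<in> Sel \<Longrightarrow> 0 \<le> prior z" using prior(1) by (simp add: Sel_def)
  have ps: "prob_space (M n E)" for n E
    unfolding M_def by (rule data_law_prob[OF Env dens])
  have cl: "conv_prob M (\<lambda>n E d. ap n E d z) (L z)" and cg: "conv_prob M (\<lambda>n E d. ag n E d z) (G z)"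
    if "z \<in> Sel" "prior z > 0" for z
    using conv_local[of z] conv_pooled[of z] that unfolding Sel_def ap_def ag_def L_def G_def by auto
  have Ameas: "(\<lambda>d. A n E d z) \<in> borel_measurable (M n E)" if "z \<in> Sel" "prior z > 0" for n E z
    using cl[OF that] cg[OF that] unfolding conv_prob_def A_def by (intro borel_measurable_diff) auto
  have Aconv: "((\<lambda>(n, E). measure (M n E) {d \<in> space (M n E). \<epsilon> < \<bar>A n E d z - c z\<bar>}) \<longlongrightarrow> 0)
         (sequentially \<times>\<^sub>F sequentially)" if z: "z \<in> Sel" "prior z > 0" and \<epsilon>: "\<epsilon> > 0" for z \<epsilon>
  proof -
    let ?Sg = "\<lambda>n E. {d \<in> space (M n E). \<epsilon>/2 < \<bar>ag n E d z - G z\<bar>}"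
    let ?Sp = "\<lambda>n E. {d \<in> space (M n E). \<epsilon>/2 < \<bar>ap n E d z - L z\<bar>}"
    have tg: "((\<lambda>(n, E). measure (M n E) (?Sg n E)) \<longlongrightarrow> 0) (sequentially \<times>\<^sub>F sequentially)"
    proof -
      have "\<epsilon>/2 > 0" using \<epsilon> by simp
      then show ?thesis using cg[OF z] unfolding conv_prob_def by blast
    qed
    have tp: "((\<lambda>(n, E). measure (M n E) (?Sp n E)) \<longlongrightarrow> 0) (sequentially \<times>\<^sub>F sequentially)"
    proof -
      have "\<epsilon>/2 > 0" using \<epsilon> by simp
      then show ?thesis using cl[OF z] unfolding conv_prob_def by blast
    qed
    have mg: "(\<lambda>d. ag n E d z) \<in> borel_measurable (M n E)" and mp: "(\<lambda>d. ap n E d z) \<in> borel_measurable (M n E)" for n E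
      using cg[OF z] cl[OF z] unfolding conv_prob_def by auto
    have le: "measure (M n E) {d \<in> space (M n E). \<epsilon> < \<bar>A n E d z - c z\<bar>}
              \<le> measure (M n E) (?Sg n E) + measure (M n E) (?Sp n E)" for n E
    proof -
      interpret prob_space "M n E" by (rule ps)
      have sg: "?Sg n E \<in> sets (M n E)" using mg[of n E] by measurable
      have sp: "?Sp n E \<in> sets (M n E)" using mp[of n E] by measurable
      have "{d \<in> space (M n E). \<epsilon> < \<bar>A n E d z - c z\<bar>} \<subseteq> ?Sg n E \<union> ?Sp n E"
        unfolding A_def c_def by (auto simp: abs_if split: if_splits)
      then have "measure (M n E) {d \<in> space (M n E). \<epsilon> < \<bar>A n E d z - c z\<bar>} \<le> measure (M n E) (?Sg n E \<union> ?Sp n E)"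
        using sg sp by (intro finite_measure_mono) auto
      also have "\<dots> \<le> measure (M n E) (?Sg n E) + measure (M n E) (?Sp n E)"
        using sg sp by (rule measure_Un_le)
      finally show ?thesis .
    qed
    have th: "((\<lambda>(n, E). measure (M n E) (?Sg n E) + measure (M n E) (?Sp n E)) \<longlongrightarrow> 0) (sequentially \<times>\<^sub>F sequentially)"
      using tendsto_add[OF tg tp] by (simp add: split_beta')
    show ?thesis
    proof (rule tendsto_sandwich[OF _ _ tendsto_const th])
      show "\<forall>\<^sub>F x in sequentially \<times>\<^sub>F sequentially. 0 \<le> (case x of (n, E) \<Rightarrow> measure (M n E) {d \<in> space (M n E). \<epsilon> < \<bar>A n E d z - c z\<bar>})"
        by (intro always_eventually) (auto split: prod.splits)
      show "\<forall>\<^sub>F x in sequentially \<times>\<^sub>F sequentially. (case x of (n, E) \<Rightarrow> measure (M n E) {d \<in> space (M n E). \<epsilon> < \<bar>A n E d z - c z\<bar>})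
         \<le> (case x of (n, E) \<Rightarrow> measure (M n E) (?Sg n E) + measure (M n E) (?Sp n E))"
        using le by (intro always_eventually) (auto split: prod.splits)
    qed
  qed
  have wA: "w n E d z = prior z * exp (real n * real E * A n E d z)"
    if d: "d \<in> space (M n E)" and z: "z \<in> Sel" and nE: "0 < n" "0 < E" for n E d z
  proof -
    let ?g = "\<lambda>e i. ghat n E d z (proj z (fst (d e i))) (snd (d e i))"
    let ?p = "\<lambda>e i. phat n E d z e (proj z (fst (d e i))) (snd (d e i))"
    have gpos: "0 < ?g e i" for e i
      using ghat[OF d z[unfolded Sel_def]] model_pos z unfolding Sel_def maximizes_def by auto
    have ppos: "0 < ?p e i" if "e < E" for e i
      using phat[OF d z[unfolded Sel_def] that] model_pos z unfolding Sel_def maximizes_def by auto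
    have "(\<Prod>e<E. \<Prod>i<n. ?g e i / ?p e i) = (\<Prod>e<E. \<Prod>i<n. exp (ln (?g e i) - ln (?p e i)))"
      using gpos ppos by (intro prod.cong refl) (simp add: exp_diff)
    also have "\<dots> = exp (\<Sum>e<E. \<Sum>i<n. ln (?g e i) - ln (?p e i))"
      by (simp add: exp_sum)
    also have "(\<Sum>e<E. \<Sum>i<n. ln (?g e i) - ln (?p e i)) = (\<Sum>i<n. \<Sum>e<E. ln (?g e i)) - (\<Sum>i<n. \<Sum>e<E. ln (?p e i))"
      by (simp add: sum_subtractf sum.swap[of _ "{..<E}"])
    also have "\<dots> = real n * real E * A n E d z"
      unfolding A_def ag_def ap_def using nE by (simp add: field_simps)
    finally show ?thesis unfolding w_def bip_weight_def by simp
  qed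
  have wmeas: "(\<lambda>d. w n E d z) \<in> borel_measurable (M n E)" if z: "z \<in> Sel" for n E z
  proof (cases "n = 0 \<or> E = 0")
    case True
    then have "w n E d z = prior z" for d unfolding w_def bip_weight_def by auto
    then show ?thesis by simp
  next
    case False
    show ?thesis
    proof (cases "prior z > 0")
      case True
      have "(\<lambda>d. prior z * exp (real n * real E * A n E d z)) \<in> borel_measurable (M n E)"
        using Ameas[OF z True] by measurable
      then show ?thesis using wA[OF _ z] False by (subst measurable_cong) auto
    next
      case False
      then have "prior z = 0" using prior_nn[OF z] by simp
      then have "w n E d z = 0" for d unfolding w_def bip_weight_def by simp
      then show ?thesis by simp
    qed
  qed
  have zh: "zhat n E d \<in> Sel \<and>
       (\<forall>z\<in>Sel. w n E d z / (\<Sum>z'\<in>Sel. w n E d z') \<le> w n E d (zhat n E d) / (\<Sum>z'\<in>Sel. w n E d z'))"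
    if "d \<in> space (M n E)" for n E d
    using zhat[OF that] unfolding maximizes_def bip_post_def w_def Sel_def by auto
  have zhmeas: "{d \<in> space (M n E). zhat n E d \<in> Zstar} \<in> sets (M n E)" for n E
  proof -
    have "zhat n E -` Zstar \<inter> space (M n E) \<in> sets (M n E)"
      using zhat_meas[of n E] by (rule measurable_sets) simp
    moreover have "zhat n E -` Zstar \<inter> space (M n E) = {d \<in> space (M n E). zhat n E d \<in> Zstar}" by auto
    ultimately show ?thesis by simp
  qed
  have "((\<lambda>(n, E). measure (M n E) {d \<in> space (M n E). zhat n E d \<in> Zstar}) \<longlongrightarrow> 1) (sequentially \<times>\<^sub>F sequentially) \<and>
         conv_prob M (\<lambda>n E d. \<Sum>z\<in>Zstar. w n E d z / (\<Sum>z'\<in>Sel. w n E d z')) 1"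
    by (rule core[OF ps fin Z z0 prior_nn Ameas Aconv wA wmeas zh zhmeas])
  moreover have "bip_post p prior n E (phat n E d) (ghat n E d) d z = w n E d z / (\<Sum>z'\<in>Sel. w n E d z')" for n E d z
    unfolding bip_post_def w_def Sel_def ..
  ultimately show ?thesis by simp
qed

end
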